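(* Let $s$ be a deterministic infinite sequence over $\mathcal A$ such that the limit \[ h(s):=\lim_{n\to\infty}\frac1n\ln\Big(\frac{1}{p(s^{(n)})}\Big) \] exists and satisfies $h(s)>0$. Then $\dfrac{X_n(s)}{\ln n}\to\dfrac{1}{h(s)}$ almost surely as $n\to\infty$.
   Context: Alphabet $\mathcal A=\{A,C,G,T\}$. $U=(U_n)_{n\ge1}$ is a stationary Markov chain of order 1 on $\mathcal A$ with transition matrix $Q$ (irreducible and aperiodic) started from its invariant measure $p$. For an infinite sequence $s$, $s^{(n)}=s_1\dots s_n$ and $p(s^{(n)}):=\mathbb P(U_1=s_n,\dots,U_n=s_1)$. CGR-tree: nodes of the complete quaternary tree are identified with finite words over $\mathcal A$ (root = empty word, children of $w$ are $wa$). With $W(n)=U_n\dots U_1$, set $\mathcal T_0=\{\text{root}\}$ and for $n\ge1$ let $\mathcal T_n=\mathcal T_{n-1}\cup\{w_n\}$ where $w_n$ is the shortest prefix (of length $\ge1$) of $W(n)$ that is not a node of $\mathcal T_{n-1}$. For an infinite sequence $s$, $X_n(s)=\max\{k\ge0: s^{(k)}\in\mathcal T_n\}$. *)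

theory Defs
  imports "HOL-Probability.Probability"
begin

datatype nucl = A | C | G | T

lemma UNIV_nucl: "(UNIV :: nucl set) = {A, C, G, T}"
  by (auto intro: nucl.exhaust)

instance nucl :: finite
  by standard (simp add: UNIV_nucl)

fun mpow :: "(nucl \<Rightarrow> nucl \<Rightarrow> real) \<Rightarrow> nat \<Rightarrow> nucl \<Rightarrow> nucl \<Rightarrow> real" where
  "mpow Q 0 a b = (if a = b then 1 else 0)"
| "mpow Q (Suc n) a b = (\<Sum>c\<in>UNIV. mpow Q n a c * Q c b)"

definition stochastic_matrix :: "(nucl \<Rightarrow> nucl \<Rightarrow> real) \<Rightarrow> bool" where
  "stochastic_matrix Q \<longleftrightarrow> (\<forall>a b. 0 \<le> Q a b) \<and> (\<forall>a. (\<Sum>b\<in>UNIV. Q a b) = 1)"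

definition irreducible_matrix :: "(nucl \<Rightarrow> nucl \<Rightarrow> real) \<Rightarrow> bool" where
  "irreducible_matrix Q \<longleftrightarrow> (\<forall>a b. \<exists>n>0. mpow Q n a b > 0)"

definition aperiodic_matrix :: "(nucl \<Rightarrow> nucl \<Rightarrow> real) \<Rightarrow> bool" where
  "aperiodic_matrix Q \<longleftrightarrow> (\<forall>a. Gcd {n::nat. n > 0 \<and> mpow Q n a a > 0} = 1)"

definition invariant_measure :: "(nucl \<Rightarrow> nucl \<Rightarrow> real) \<Rightarrow> (nucl \<Rightarrow> real) \<Rightarrow> bool" where
  "invariant_measure Q p \<longleftrightarrow> (\<forall>a. 0 \<le> p a) \<and> (\<Sum>a\<in>UNIV. p a) = 1 \<and>
     (\<forall>b. (\<Sum>a\<in>UNIV. p a * Q a b) = p b)"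

text \<open>U (indexed from 1; U 0 unused) is a Markov chain of order 1 with transition matrix Q
  started from p: all finite-dimensional laws of (U 1, ..., U n) are those of the chain.\<close>
definition markov_chain_from ::
    "'w measure \<Rightarrow> (nat \<Rightarrow> 'w \<Rightarrow> nucl) \<Rightarrow> (nucl \<Rightarrow> real) \<Rightarrow> (nucl \<Rightarrow> nucl \<Rightarrow> real) \<Rightarrow> bool" where
  "markov_chain_from M U p Q \<longleftrightarrow>
     (\<forall>i. U i \<in> measurable M (count_space UNIV)) \<and>
     (\<forall>n\<ge>1. \<forall>a :: nat \<Rightarrow> nucl.
        measure M {\<omega> \<in> space M. \<forall>i\<in>{1..n}. U i \<omega> = a i}
          = p (a 1) * (\<Prod>i\<in>{1..<n}. Q (a i) (a (Suc i))))"

definition pword :: "'w measure \<Rightarrow> (nat \<Rightarrow> 'w \<Rightarrow> nucl) \<Rightarrow> (nat \<Rightarrow> nucl) \<Rightarrow> nat \<Rightarrow> real" where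
  "pword M U s n = measure M {\<omega> \<in> space M. \<forall>i\<in>{1..n}. U i \<omega> = s (n + 1 - i)}"

text \<open>W(n) = U_n ... U_1 as a word (list), for a realisation u (indexed from 1).\<close>
definition Wword :: "(nat \<Rightarrow> nucl) \<Rightarrow> nat \<Rightarrow> nucl list" where
  "Wword u n = map (\<lambda>i. u (n - i)) [0..<n]"

text \<open>CGR-tree: set of nodes (finite words; root = []).\<close>
fun cgr_tree :: "(nat \<Rightarrow> nucl) \<Rightarrow> nat \<Rightarrow> nucl list set" where
  "cgr_tree u 0 = {[]}"
| "cgr_tree u (Suc n) =
     (let W = Wword u (Suc n);
          k = (LEAST k. 1 \<le> k \<and> take k W \<notin> cgr_tree u n)
      in insert (take k W) (cgr_tree u n))"

text \<open>s^(k) = s_1 ... s_k for a sequence s indexed from 1.\<close>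
definition sprefix :: "(nat \<Rightarrow> nucl) \<Rightarrow> nat \<Rightarrow> nucl list" where
  "sprefix s k = map (\<lambda>i. s (Suc i)) [0..<k]"

definition Xn :: "(nat \<Rightarrow> nucl) \<Rightarrow> nat \<Rightarrow> (nat \<Rightarrow> nucl) \<Rightarrow> nat" where
  "Xn u n s = Max {k. sprefix s k \<in> cgr_tree u n}"

end

theory Submission
  imports Defs "HOL-Real_Asymp.Real_Asymp"
begin

definition LL :: "nat \<Rightarrow> nucl list set" where "LL n = {xs. length xs = n}"
definition Sm :: "nat \<Rightarrow> (nucl list \<Rightarrow> real) \<Rightarrow> real" where "Sm n f = (\<Sum>xs\<in>LL n. f xs)"

lemma finite_LL[simp]: "finite (LL n)"
  using finite_lists_length_eq[of "UNIV::nucl set" n] by (simp add: LL_def)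

lemma LL_add: "LL (m+n) = (\<lambda>(xs,ys). xs@ys) ` (LL m \<times> LL n)"
proof
  show "LL (m + n) \<subseteq> (\<lambda>(xs, ys). xs @ ys) ` (LL m \<times> LL n)"
  proof
    fix zs assume "zs \<in> LL (m+n)"
    then show "zs \<in> (\<lambda>(xs, ys). xs @ ys) ` (LL m \<times> LL n)"
      by (auto simp: LL_def intro!: image_eqI[of _ _ "(take m zs, drop m zs)"])
  qed
qed (auto simp: LL_def)

lemma Sm_add: "Sm (m+n) f = Sm m (\<lambda>xs. Sm n (\<lambda>ys. f (xs@ys)))"
proof -
  have inj: "inj_on (\<lambda>(xs,ys). xs@ys) (LL m \<times> LL n)"
    by (auto simp: inj_on_def LL_def)
  have "Sm (m+n) f = (\<Sum>z\<in>LL m \<times> LL n. f (case z of (xs,ys) \<Rightarrow> xs@ys))"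
    unfolding Sm_def LL_add by (subst sum.reindex[OF inj]) (simp add: comp_def)
  also have "\<dots> = Sm m (\<lambda>xs. Sm n (\<lambda>ys. f (xs@ys)))"
    unfolding Sm_def by (simp add: sum.cartesian_product prod.case_distrib)
  finally show ?thesis .
qed

lemma LL_1: "LL 1 = (\<lambda>x. [x]) ` UNIV"
proof
  show "LL 1 \<subseteq> range (\<lambda>x. [x])"
  proof
    fix xs assume "xs \<in> LL 1"
    then obtain x where "xs = [x]" by (auto simp: LL_def length_Suc_conv)
    then show "xs \<in> range (\<lambda>x. [x])" by auto
  qed
qed (auto simp: LL_def)

lemma Sm_1: "Sm 1 f = (\<Sum>x\<in>UNIV. f [x])"
  unfolding Sm_def LL_1 by (subst sum.reindex) (auto simp: inj_on_def)

lemma Sm_Suc0: "Sm (Suc 0) f = (\<Sum>x\<in>UNIV. f [x])"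
  using Sm_1 by simp

lemma sum_ofbool: "(\<Sum>b\<in>UNIV. x * of_bool ((l::nucl) = b) * h b) = (x * h l :: real)"
proof -
  have "(\<Sum>b\<in>UNIV. x * of_bool (l = b) * h b) = (\<Sum>b\<in>UNIV. if b = l then x * h b else 0)"
    by (rule sum.cong) auto
  then show ?thesis using sum.delta[of UNIV l "\<lambda>b. x * h b"] by simp
qed

lemma Sm_0: "Sm 0 f = f []"
  by (simp add: Sm_def LL_def)

lemma Sm_Suc_right: "Sm (Suc n) f = Sm n (\<lambda>xs. \<Sum>x\<in>UNIV. f (xs@[x]))"
  using Sm_add[of n 1 f] Sm_1 by simp

lemma Sm_mono: "(\<And>xs. length xs = n \<Longrightarrow> f xs \<le> g xs) \<Longrightarrow> Sm n f \<le> Sm n g"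
  unfolding Sm_def by (rule sum_mono) (auto simp: LL_def)

lemma Sm_cong: "(\<And>xs. length xs = n \<Longrightarrow> f xs = g xs) \<Longrightarrow> Sm n f = Sm n g"
  unfolding Sm_def by (rule sum.cong) (auto simp: LL_def)

lemma Sm_nonneg: "(\<And>xs. length xs = n \<Longrightarrow> 0 \<le> f xs) \<Longrightarrow> 0 \<le> Sm n f"
  unfolding Sm_def by (rule sum_nonneg) (auto simp: LL_def)

lemma Sm_cmult: "Sm n (\<lambda>xs. c * f xs) = c * Sm n f"
  unfolding Sm_def by (simp add: sum_distrib_left)

lemma Sm_multc: "Sm n (\<lambda>xs. f xs * c) = Sm n f * c"
  unfolding Sm_def by (simp add: sum_distrib_right)

lemma Sm_plus: "Sm n (\<lambda>xs. f xs + g xs) = Sm n f + Sm n g"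
  unfolding Sm_def by (simp add: sum.distrib)

lemma Sm_minus: "Sm n (\<lambda>xs. f xs - g xs) = Sm n f - Sm n g"
  unfolding Sm_def by (simp add: sum_subtractf)

lemma Sm_sum: "Sm n (\<lambda>xs. \<Sum>c\<in>S0. f c xs) = (\<Sum>c\<in>S0. Sm n (f c))"
  unfolding Sm_def by (rule sum.swap)

lemma Sm_single: "length v = n \<Longrightarrow> Sm n (\<lambda>xs. if xs = v then g xs else 0) = g v"
  unfolding Sm_def using sum.delta[OF finite_LL, of v g n] by (simp add: LL_def)

fun cw :: "(nucl \<Rightarrow> nucl \<Rightarrow> real) \<Rightarrow> nucl \<Rightarrow> nucl list \<Rightarrow> real" where
  "cw Q a [] = 1"
| "cw Q a (x#xs) = Q a x * cw Q x xs"

definition piw :: "(nucl \<Rightarrow> real) \<Rightarrow> (nucl \<Rightarrow> nucl \<Rightarrow> real) \<Rightarrow> nucl list \<Rightarrow> real" where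
  "piw p Q xs = (case xs of [] \<Rightarrow> 1 | x#ys \<Rightarrow> p x * cw Q x ys)"

lemma pi_Nil[simp]: "piw p Q [] = 1" and pi_Cons[simp]: "piw p Q (x#ys) = p x * cw Q x ys"
  by (simp_all add: piw_def)

lemma cw_append: "cw Q a (xs@ys) = cw Q a xs * cw Q (last (a#xs)) ys"
  by (induction xs arbitrary: a) auto

definition occ :: "nucl list \<Rightarrow> nucl list \<Rightarrow> bool" where
  "occ v ys \<longleftrightarrow> (\<exists>k. k + length v \<le> length ys \<and> take (length v) (drop k ys) = v)"

locale mchain =
  fixes p :: "nucl \<Rightarrow> real" and Q :: "nucl \<Rightarrow> nucl \<Rightarrow> real"
  assumes stoch: "stochastic_matrix Q" and inv: "invariant_measure Q p"
begin

lemma Q_nonneg: "0 \<le> Q a b" using stoch by (simp add: stochastic_matrix_def)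
lemma Q_sum: "(\<Sum>b\<in>UNIV. Q a b) = 1" using stoch by (simp add: stochastic_matrix_def)
lemma p_nonneg: "0 \<le> p a" using inv by (simp add: invariant_measure_def)
lemma p_sum: "(\<Sum>a\<in>UNIV. p a) = 1" using inv by (simp add: invariant_measure_def)
lemma p_inv: "(\<Sum>a\<in>UNIV. p a * Q a b) = p b" using inv by (simp add: invariant_measure_def)
lemma p_le1: "p a \<le> 1"
proof -
  have "p a \<le> (\<Sum>a\<in>UNIV. p a)" by (rule member_le_sum) (auto simp: p_nonneg)
  then show ?thesis by (simp add: p_sum)
qed

lemma cw_nonneg: "0 \<le> cw Q a xs"
  by (induction xs arbitrary: a) (auto simp: Q_nonneg)

lemma pi_nonneg: "0 \<le> piw p Q xs"
  by (cases xs) (auto simp: p_nonneg cw_nonneg)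

lemma pi_append: "xs \<noteq> [] \<Longrightarrow> piw p Q (xs@ys) = piw p Q xs * cw Q (last xs) ys"
  by (cases xs) (auto simp: cw_append)

lemma Sm_cw: "Sm n (cw Q a) = 1"
proof (induction n)
  case 0 then show ?case by (simp add: Sm_0)
next
  case (Suc n)
  have "Sm (Suc n) (cw Q a) = Sm n (\<lambda>xs. cw Q a xs * (\<Sum>x\<in>UNIV. Q (last (a#xs)) x))"
    unfolding Sm_Suc_right by (simp add: cw_append sum_distrib_left)
  also have "\<dots> = Sm n (cw Q a)" by (simp add: Q_sum)
  finally show ?case using Suc by simp
qed

lemma mpow_Sm: "mpow Q n a c = Sm n (\<lambda>xs. cw Q a xs * of_bool (last (a#xs) = c))"
proof (induction n arbitrary: c)
  case 0 then show ?case by (simp add: Sm_0)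
next
  case (Suc n)
  have "mpow Q (Suc n) a c = (\<Sum>b\<in>UNIV. Sm n (\<lambda>xs. cw Q a xs * of_bool (last (a#xs) = b) * Q b c))"
    by (simp add: Suc Sm_multc)
  also have "\<dots> = Sm n (\<lambda>xs. \<Sum>b\<in>UNIV. cw Q a xs * of_bool (last (a#xs) = b) * Q b c)"
    by (simp add: Sm_sum)
  also have "\<dots> = Sm n (\<lambda>xs. cw Q a xs * Q (last (a#xs)) c)"
    by (rule Sm_cong) (rule sum_ofbool)
  also have "\<dots> = Sm (Suc n) (\<lambda>xs. cw Q a xs * of_bool (last (a#xs) = c))"
    unfolding Sm_Suc_right
  proof (rule Sm_cong)
    fix xs :: "nucl list"
    have "(\<Sum>x\<in>UNIV. cw Q a (xs @ [x]) * of_bool (last (a # xs @ [x]) = c))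
      = (\<Sum>x\<in>UNIV. cw Q a xs * of_bool (c = x) * Q (last (a#xs)) x)"
      by (rule sum.cong) (auto simp: cw_append)
    then show "cw Q a xs * Q (last (a # xs)) c =
         (\<Sum>x\<in>UNIV. cw Q a (xs @ [x]) * of_bool (last (a # xs @ [x]) = c))"
      by (simp add: sum_ofbool)
  qed
  finally show ?case .
qed

lemma mpow_Suc_Sm: "mpow Q (Suc n) a c = Sm n (\<lambda>xs. cw Q a xs * Q (last (a#xs)) c)"
  by (simp add: Sm_multc[symmetric] Sm_sum[symmetric] mpow_Sm sum_ofbool)

lemma marginal: "n \<ge> 1 \<Longrightarrow> Sm n (\<lambda>xs. piw p Q xs * g (last xs)) = (\<Sum>c\<in>UNIV. p c * g c)"
proof (induction n arbitrary: g rule: dec_induct)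
  case base then show ?case by (simp add: Sm_Suc0)
next
  case (step n)
  have "Sm (Suc n) (\<lambda>xs. piw p Q xs * g (last xs))
      = Sm n (\<lambda>xs. piw p Q xs * (\<lambda>c. \<Sum>x\<in>UNIV. Q c x * g x) (last xs))"
    unfolding Sm_Suc_right
  proof (rule Sm_cong)
    fix xs :: "nucl list" assume "length xs = n"
    then have "xs \<noteq> []" using step by auto
    then show "(\<Sum>x\<in>UNIV. piw p Q (xs @ [x]) * g (last (xs @ [x]))) =
          piw p Q xs * (\<Sum>x\<in>UNIV. Q (last xs) x * g x)"
      by (simp add: pi_append sum_distrib_left mult.assoc)
  qed
  also have "\<dots> = (\<Sum>c\<in>UNIV. p c * (\<Sum>x\<in>UNIV. Q c x * g x))" by (rule step.IH)
  also have "\<dots> = (\<Sum>x\<in>UNIV. (\<Sum>c\<in>UNIV. p c * Q c x) * g x)"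
    by (simp add: sum_distrib_left sum_distrib_right mult.assoc) (rule sum.swap)
  also have "\<dots> = (\<Sum>x\<in>UNIV. p x * g x)" by (simp add: p_inv)
  finally show ?case .
qed

lemma Sm_pi: "Sm n (piw p Q) = 1"
proof (cases "n = 0")
  case True then show ?thesis by (simp add: Sm_0)
next
  case False
  then show ?thesis using marginal[of n "\<lambda>_. 1"] by (simp add: p_sum)
qed

lemma sum_p_cw: "ys \<noteq> [] \<Longrightarrow> (\<Sum>c\<in>UNIV. p c * cw Q c ys) = piw p Q ys"
proof (cases ys)
  case (Cons y w)
  have "(\<Sum>c\<in>UNIV. p c * cw Q c ys) = (\<Sum>c\<in>UNIV. p c * Q c y) * cw Q y w"
    by (simp add: Cons sum_distrib_right mult.assoc)
  then show ?thesis by (simp add: p_inv Cons)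
qed simp

lemma window: "K \<ge> 1 \<Longrightarrow> Sm (a+K) (\<lambda>xs. piw p Q xs * R (drop a xs)) = Sm K (\<lambda>ys. piw p Q ys * R ys)"
proof (cases "a = 0")
  case True then show ?thesis by simp
next
  case False
  assume K: "K \<ge> 1"
  have "Sm (a+K) (\<lambda>xs. piw p Q xs * R (drop a xs))
      = Sm a (\<lambda>xs. piw p Q xs * (\<lambda>c. Sm K (\<lambda>ys. cw Q c ys * R ys)) (last xs))"
    unfolding Sm_add
  proof (rule Sm_cong)
    fix xs :: "nucl list" assume "length xs = a"
    then have "xs \<noteq> []" using False by auto
    then show "Sm K (\<lambda>ys. piw p Q (xs @ ys) * R (drop a (xs @ ys))) =
         piw p Q xs * Sm K (\<lambda>ys. cw Q (last xs) ys * R ys)"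
      using \<open>length xs = a\<close> by (simp add: pi_append Sm_cmult[symmetric] mult.assoc)
  qed
  also have "\<dots> = (\<Sum>c\<in>UNIV. p c * Sm K (\<lambda>ys. cw Q c ys * R ys))"
    using False by (intro marginal) auto
  also have "\<dots> = Sm K (\<lambda>ys. (\<Sum>c\<in>UNIV. p c * cw Q c ys) * R ys)"
    by (simp add: Sm_sum[symmetric] Sm_cmult[symmetric] sum_distrib_right mult.assoc)
  also have "\<dots> = Sm K (\<lambda>ys. piw p Q ys * R ys)"
  proof (rule Sm_cong)
    fix ys :: "nucl list" assume "length ys = K"
    then have "ys \<noteq> []" using K by auto
    then show "(\<Sum>c\<in>UNIV. p c * cw Q c ys) * R ys = piw p Q ys * R ys" by (simp add: sum_p_cw)
  qed
  finally show ?thesis .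
qed

lemma pi_cons_le: "v \<noteq> [] \<Longrightarrow> piw p Q (x#v) \<le> piw p Q v"
proof (cases v)
  case (Cons y w)
  have "piw p Q (x#v) = p x * Q x y * cw Q y w" by (simp add: Cons mult.assoc)
  also have "\<dots> \<le> (\<Sum>x\<in>UNIV. p x * Q x y) * cw Q y w"
    by (intro mult_right_mono member_le_sum) (auto simp: p_nonneg Q_nonneg cw_nonneg)
  also have "\<dots> = piw p Q v" by (simp add: p_inv Cons)
  finally show ?thesis .
qed simp

lemma pi_le_cw: "piw p Q (y#w) \<le> cw Q y w"
  using p_le1[of y] cw_nonneg[of y w] p_nonneg[of y] by (simp add: mult_left_le_one_le)

lemma occ_lower:
  assumes n: "1 \<le> n" and v: "v \<noteq> []" and B: "B \<ge> (n - 1) + length v"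
  shows "Sm B (\<lambda>ys. cw Q a ys * of_bool (occ v ys)) \<ge> mpow Q n a (hd v) * cw Q (hd v) (tl v)"
proof -
  define K where "K = length v"
  define R where "R = B - (n - 1) - K"
  have BB: "B = (n - 1) + (K + R)" using B unfolding K_def R_def by simp
  let ?f = "\<lambda>ys. cw Q a ys * of_bool (occ v ys)"
  have f0: "0 \<le> ?f ys" for ys by (simp add: cw_nonneg)
  have "Sm B ?f = Sm (n-1) (\<lambda>zs. Sm K (\<lambda>us. Sm R (\<lambda>rs. ?f (zs@us@rs))))"
    unfolding BB Sm_add by simp
  also have "\<dots> \<ge> Sm (n-1) (\<lambda>zs. Sm K (\<lambda>us. if us = v then Sm R (\<lambda>rs. ?f (zs@v@rs)) else 0))"
    by (intro Sm_mono) (auto intro!: Sm_nonneg simp: cw_nonneg)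
  also have "Sm (n-1) (\<lambda>zs. Sm K (\<lambda>us. if us = v then Sm R (\<lambda>rs. ?f (zs@v@rs)) else 0))
     = Sm (n-1) (\<lambda>zs. Sm R (\<lambda>rs. ?f (zs@v@rs)))"
    by (rule Sm_cong) (simp add: K_def Sm_single)
  also have "\<dots> = Sm (n-1) (\<lambda>zs. cw Q a zs * Q (last (a#zs)) (hd v)) * cw Q (hd v) (tl v)"
  proof -
    have "Sm R (\<lambda>rs. ?f (zs@v@rs)) = cw Q a zs * Q (last (a#zs)) (hd v) * cw Q (hd v) (tl v)" for zs
    proof -
      have "occ v (zs@v@rs)" for rs
        unfolding occ_def by (rule exI[of _ "length zs"]) simp
      moreover have "cw Q a (zs@v@rs) = cw Q a zs * cw Q (last (a#zs)) v * cw Q (last v) rs" for rs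
        using v by (simp add: cw_append)
      ultimately have "Sm R (\<lambda>rs. ?f (zs@v@rs)) = cw Q a zs * cw Q (last (a#zs)) v * Sm R (cw Q (last v))"
        by (simp add: Sm_cmult[symmetric])
      also have "\<dots> = cw Q a zs * Q (last (a#zs)) (hd v) * cw Q (hd v) (tl v)"
        using v by (cases v) (auto simp: Sm_cw mult.assoc)
      finally show ?thesis .
    qed
    then show ?thesis by (simp add: Sm_multc)
  qed
  also have "\<dots> = mpow Q n a (hd v) * cw Q (hd v) (tl v)"
    using mpow_Suc_Sm[of "n-1" a "hd v"] n by simp
  finally show ?thesis .
qed

lemma noocc_eq: "Sm B (\<lambda>ys. cw Q a ys * of_bool (\<not> occ v ys)) = 1 - Sm B (\<lambda>ys. cw Q a ys * of_bool (occ v ys))"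
proof -
  have "Sm B (\<lambda>ys. cw Q a ys * of_bool (\<not> occ v ys)) = Sm B (\<lambda>ys. cw Q a ys - cw Q a ys * of_bool (occ v ys))"
    by (rule Sm_cong) auto
  then show ?thesis by (simp add: Sm_minus Sm_cw)
qed

lemma block:
  assumes t0: "t0 \<ge> 1" and c: "\<And>a. Sm B (\<lambda>ys. cw Q a ys * of_bool (\<not> occ v ys)) \<le> c"
  shows "Sm (t0 + m*B) (\<lambda>xs. piw p Q xs * of_bool (\<forall>i<m. \<not> occ v (take B (drop (t0+i*B) xs)))) \<le> c^m"
proof (induction m)
  case 0 then show ?case by (simp add: Sm_pi)
next
  case (Suc m)
  have c0: "0 \<le> c"
  proof -
    have "0 \<le> Sm B (\<lambda>ys. cw Q A ys * of_bool (\<not> occ v ys))" by (rule Sm_nonneg) (simp add: cw_nonneg)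
    then show ?thesis using c[of A] by linarith
  qed
  let ?P = "\<lambda>m xs. (\<forall>i<m. \<not> occ v (take B (drop (t0+i*B) xs)))"
  have e: "t0 + Suc m * B = (t0 + m*B) + B" by simp
  have "Sm (t0 + Suc m * B) (\<lambda>xs. piw p Q xs * of_bool (?P (Suc m) xs))
     = Sm (t0 + m*B) (\<lambda>xs. Sm B (\<lambda>ys. piw p Q (xs@ys) * of_bool (?P (Suc m) (xs@ys))))"
    unfolding e by (rule Sm_add)
  also have "\<dots> = Sm (t0 + m*B) (\<lambda>xs. piw p Q xs * of_bool (?P m xs) * Sm B (\<lambda>ys. cw Q (last xs) ys * of_bool (\<not> occ v ys)))"
  proof (rule Sm_cong)
    fix xs :: "nucl list" assume len: "length xs = t0 + m*B"
    then have ne: "xs \<noteq> []" using t0 by auto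
    have "piw p Q (xs@ys) * of_bool (?P (Suc m) (xs@ys)) = piw p Q xs * of_bool (?P m xs) * (cw Q (last xs) ys * of_bool (\<not> occ v ys))"
      if "length ys = B" for ys
    proof -
      have "?P (Suc m) (xs@ys) \<longleftrightarrow> ?P m xs \<and> \<not> occ v ys"
      proof -
        have "take B (drop (t0+i*B) (xs@ys)) = take B (drop (t0+i*B) xs)" if "i < m" for i
        proof -
          have "Suc i * B \<le> m * B" by (rule mult_le_mono1) (use that in simp)
          then have "t0 + i*B + B \<le> length xs" using len by simp
          then show ?thesis by simp
        qed
        moreover have "take B (drop (t0+m*B) (xs@ys)) = ys" using len that by simp
        ultimately have E1: "\<And>i. i < m \<Longrightarrow> take B (drop (t0+i*B) (xs@ys)) = take B (drop (t0+i*B) xs)"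
          and E2: "take B (drop (t0+m*B) (xs@ys)) = ys" by blast+
        show ?thesis
        proof
          assume H: "?P (Suc m) (xs@ys)"
          have "\<not> occ v (take B (drop (t0+i*B) xs))" if "i < m" for i
            using H that E1[OF that] less_SucI by metis
          moreover have "\<not> occ v ys" using H[rule_format, of m] E2 by simp
          ultimately show "?P m xs \<and> \<not> occ v ys" by blast
        next
          assume H: "?P m xs \<and> \<not> occ v ys"
          show "?P (Suc m) (xs@ys)"
          proof (intro allI impI)
            fix i assume "i < Suc m"
            then consider "i < m" | "i = m" by linarith
            then show "\<not> occ v (take B (drop (t0+i*B) (xs@ys)))"
            proof cases
              case 1 then show ?thesis using H E1[OF 1] by metis
            next
              case 2 then show ?thesis using H E2 by simp
            qed
          qed
        qed
      qed
      then show ?thesis using ne by (simp add: pi_append)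
    qed
    then have "Sm B (\<lambda>ys. piw p Q (xs@ys) * of_bool (?P (Suc m) (xs@ys))) =
      Sm B (\<lambda>ys. piw p Q xs * of_bool (?P m xs) * (cw Q (last xs) ys * of_bool (\<not> occ v ys)))"
      by (rule Sm_cong)
    then show "Sm B (\<lambda>ys. piw p Q (xs@ys) * of_bool (?P (Suc m) (xs@ys))) =
      piw p Q xs * of_bool (?P m xs) * Sm B (\<lambda>ys. cw Q (last xs) ys * of_bool (\<not> occ v ys))"
      by (simp only: Sm_cmult)
  qed
  also have "\<dots> \<le> Sm (t0 + m*B) (\<lambda>xs. piw p Q xs * of_bool (?P m xs) * c)"
    by (intro Sm_mono mult_left_mono c) (auto simp: pi_nonneg)
  also have "\<dots> \<le> c^m * c" using Suc c0 by (simp add: Sm_multc mult_right_mono)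
  finally show ?case by (simp add: mult.commute)
qed

end

definition wl :: "(nat \<Rightarrow> 'w \<Rightarrow> nucl) \<Rightarrow> 'w \<Rightarrow> nat \<Rightarrow> nat \<Rightarrow> nucl list" where
  "wl U \<omega> a K = map (\<lambda>i. U (a+1+i) \<omega>) [0..<K]"

lemma length_wl[simp]: "length (wl U \<omega> a K) = K" by (simp add: wl_def)

lemma wl_drop: "drop a (wl U \<omega> 0 (a+K)) = wl U \<omega> a K"
  by (simp add: wl_def drop_map list_eq_iff_nth_eq)

lemma wl_take_drop: "t + B \<le> N \<Longrightarrow> take B (drop t (wl U \<omega> 0 N)) = wl U \<omega> t B"
  by (simp add: wl_def list_eq_iff_nth_eq)

lemma cw_prod: "cw Q x ys = (\<Prod>i<length ys. Q ((x#ys)!i) (ys!i))"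
proof (induction ys arbitrary: x)
  case (Cons y ys)
  show ?case by (simp add: Cons prod.lessThan_Suc_shift del: prod.lessThan_Suc)
qed simp

locale mproc = mchain p Q for p Q +
  fixes M :: "'w measure" and U :: "nat \<Rightarrow> 'w \<Rightarrow> nucl"
  assumes prob: "prob_space M" and mcf: "markov_chain_from M U p Q"
begin

lemma U_meas: "U i \<in> measurable M (count_space UNIV)"
  using mcf by (simp add: markov_chain_from_def)

lemma U_sets: "{\<omega>\<in>space M. U i \<omega> = c} \<in> sets M"
proof -
  have "U i -` {c} \<inter> space M \<in> sets M" by (rule measurable_sets[OF U_meas]) simp
  moreover have "U i -` {c} \<inter> space M = {\<omega>\<in>space M. U i \<omega> = c}" by auto
  ultimately show ?thesis by simp
qed

lemma cyl_sets: "{\<omega>\<in>space M. wl U \<omega> a K = xs} \<in> sets M"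
proof (cases "length xs = K")
  case True
  have "{\<omega>\<in>space M. wl U \<omega> a K = xs} = {\<omega>\<in>space M. \<forall>i\<in>{..<K}. U (a+1+i) \<omega> = xs!i}"
    using True by (auto simp: wl_def list_eq_iff_nth_eq)
  also have "\<dots> \<in> sets M"
    by (rule sets.sets_Collect_finite_All) (auto intro: U_sets)
  finally show ?thesis .
next
  case False
  then have eq: "{\<omega>\<in>space M. wl U \<omega> a K = xs} = {}" by auto
  show ?thesis by (simp only: eq sets.empty_sets)
qed

lemma ev_sets: "{\<omega>\<in>space M. R (wl U \<omega> a K)} \<in> sets M"
proof -
  have "{\<omega>\<in>space M. R (wl U \<omega> a K)} = (\<Union>xs\<in>{xs\<in>LL K. R xs}. {\<omega>\<in>space M. wl U \<omega> a K = xs})"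
    by (auto simp: LL_def)
  also have "\<dots> \<in> sets M" by (intro sets.finite_UN) (auto intro: cyl_sets)
  finally show ?thesis .
qed

lemma cyl_measure: "length xs = N \<Longrightarrow> measure M {\<omega>\<in>space M. wl U \<omega> 0 N = xs} = piw p Q xs"
proof (cases xs)
  case Nil
  assume "length xs = N"
  then have "{\<omega>\<in>space M. wl U \<omega> 0 N = xs} = space M" using Nil by (auto simp: wl_def)
  then show ?thesis using Nil prob_space.prob_space[OF prob] by simp
next
  case (Cons x ys)
  assume len: "length xs = N"
  define a where "a = (\<lambda>i. xs!(i-1))"
  have N1: "N \<ge> 1" using len Cons by auto
  have "{\<omega>\<in>space M. wl U \<omega> 0 N = xs} = {\<omega>\<in>space M. \<forall>i\<in>{1..N}. U i \<omega> = a i}"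
  proof -
    have "wl U \<omega> 0 N = xs \<longleftrightarrow> (\<forall>i\<in>{1..N}. U i \<omega> = a i)" for \<omega>
    proof
      assume "wl U \<omega> 0 N = xs"
      show "\<forall>i\<in>{1..N}. U i \<omega> = a i"
      proof
        fix i assume i: "i \<in> {1..N}"
        have "wl U \<omega> 0 N ! (i - 1) = xs ! (i - 1)" using \<open>wl U \<omega> 0 N = xs\<close> by simp
        moreover have "i - 1 < N" "Suc (i - 1) = i" using i by auto
        ultimately show "U i \<omega> = a i" by (simp add: a_def wl_def)
      qed
    next
      assume H: "\<forall>i\<in>{1..N}. U i \<omega> = a i"
      show "wl U \<omega> 0 N = xs"
        unfolding wl_def list_eq_iff_nth_eq using len
      proof (intro conjI allI impI)
        fix i assume "i < length (map (\<lambda>i. U (0 + 1 + i) \<omega>) [0..<N])"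
        then have "i < N" by simp
        then show "map (\<lambda>i. U (0 + 1 + i) \<omega>) [0..<N] ! i = xs ! i"
          using H[rule_format, of "Suc i"] by (simp add: a_def)
      qed simp
    qed
    then show ?thesis by auto
  qed
  also have "measure M \<dots> = p (a 1) * (\<Prod>i\<in>{1..<N}. Q (a i) (a (Suc i)))"
    using mcf N1 by (simp add: markov_chain_from_def)
  also have "\<dots> = piw p Q xs"
  proof -
    have "(\<Prod>i\<in>{1..<N}. Q (a i) (a (Suc i))) = (\<Prod>i\<in>{0..<length ys}. Q (a (Suc i)) (a (Suc (Suc i))))"
      using len Cons prod.shift_bounds_Suc_ivl[of "\<lambda>i. Q (a i) (a (Suc i))" 0 "length ys"] by simp
    also have "\<dots> = cw Q x ys"
      by (simp add: cw_prod a_def Cons atLeast0LessThan)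
    finally show ?thesis by (simp add: a_def Cons)
  qed
  finally show ?thesis .
qed

lemma prob_list: "measure M {\<omega>\<in>space M. R (wl U \<omega> 0 N)} = Sm N (\<lambda>xs. piw p Q xs * of_bool (R xs))"
proof -
  interpret prob_space M by (rule prob)
  let ?S = "{xs\<in>LL N. R xs}"
  have "{\<omega>\<in>space M. R (wl U \<omega> 0 N)} = (\<Union>xs\<in>?S. {\<omega>\<in>space M. wl U \<omega> 0 N = xs})"
    by (auto simp: LL_def)
  then have "measure M {\<omega>\<in>space M. R (wl U \<omega> 0 N)} = (\<Sum>xs\<in>?S. measure M {\<omega>\<in>space M. wl U \<omega> 0 N = xs})"
    by (simp only:) (rule finite_measure_finite_Union, auto intro: cyl_sets simp: disjoint_family_on_def)
  also have "\<dots> = (\<Sum>xs\<in>?S. piw p Q xs)"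
    by (rule sum.cong) (auto simp: LL_def cyl_measure)
  also have "\<dots> = Sm N (\<lambda>xs. piw p Q xs * of_bool (R xs))"
  proof -
    have "(\<Sum>xs\<in>?S. piw p Q xs) = (\<Sum>xs\<in>LL N. if R xs then piw p Q xs else 0)"
      by (rule sum.inter_filter[OF finite_LL])
    also have "\<dots> = Sm N (\<lambda>xs. piw p Q xs * of_bool (R xs))"
      unfolding Sm_def by (rule sum.cong[OF refl]) simp
    finally show ?thesis .
  qed
  finally show ?thesis .
qed

lemma prob_window: "K \<ge> 1 \<Longrightarrow> measure M {\<omega>\<in>space M. R (wl U \<omega> a K)} = Sm K (\<lambda>ys. piw p Q ys * of_bool (R ys))"
proof -
  assume K: "K \<ge> 1"
  have "measure M {\<omega>\<in>space M. R (wl U \<omega> a K)} = measure M {\<omega>\<in>space M. R (drop a (wl U \<omega> 0 (a+K)))}"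
    by (simp add: wl_drop)
  also have "\<dots> = Sm (a+K) (\<lambda>xs. piw p Q xs * of_bool (R (drop a xs)))" by (rule prob_list)
  also have "\<dots> = Sm K (\<lambda>ys. piw p Q ys * of_bool (R ys))" using window[OF K, of a "\<lambda>zs. of_bool (R zs)"] by simp
  finally show ?thesis .
qed

lemma pword_pi: "pword M U s j = piw p Q (rev (sprefix s j))"
proof -
  have "{\<omega> \<in> space M. \<forall>i\<in>{1..j}. U i \<omega> = s (j + 1 - i)} = {\<omega>\<in>space M. wl U \<omega> 0 j = rev (sprefix s j)}"
  proof -
    have "(\<forall>i\<in>{1..j}. U i \<omega> = s (j + 1 - i)) \<longleftrightarrow> wl U \<omega> 0 j = rev (sprefix s j)" for \<omega>
    proof
      assume H: "\<forall>i\<in>{1..j}. U i \<omega> = s (j + 1 - i)"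
      show "wl U \<omega> 0 j = rev (sprefix s j)"
        unfolding list_eq_iff_nth_eq
      proof (intro conjI allI impI)
        fix i assume "i < length (wl U \<omega> 0 j)"
        then have i: "i < j" by simp
        then show "wl U \<omega> 0 j ! i = rev (sprefix s j) ! i"
          using H[rule_format, of "Suc i"] by (simp add: wl_def sprefix_def rev_nth Suc_diff_Suc)
      qed (simp add: sprefix_def)
    next
      assume H: "wl U \<omega> 0 j = rev (sprefix s j)"
      show "\<forall>i\<in>{1..j}. U i \<omega> = s (j + 1 - i)"
      proof
        fix i assume i: "i \<in> {1..j}"
        then have "wl U \<omega> 0 j ! (i - 1) = rev (sprefix s j) ! (i - 1)" using H by simp
        moreover have "i - 1 < j" "Suc (i - 1) = i" "j - Suc (i - 1) < j" "Suc (j - Suc (i - 1)) = j + 1 - i" "Suc (j - i) = j + 1 - i"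
          using i by auto
        ultimately show "U i \<omega> = s (j + 1 - i)"
          by (simp add: wl_def sprefix_def rev_nth)
      qed
    qed
    then show ?thesis by auto
  qed
  then have "pword M U s j = measure M {\<omega>\<in>space M. wl U \<omega> 0 j = rev (sprefix s j)}"
    by (simp add: pword_def)
  also have "\<dots> = Sm j (\<lambda>xs. piw p Q xs * of_bool (xs = rev (sprefix s j)))" by (rule prob_list)
  also have "\<dots> = piw p Q (rev (sprefix s j))"
    using Sm_single[of "rev (sprefix s j)" j "piw p Q"] by (simp add: sprefix_def of_bool_def if_distrib cong: if_cong)
  finally show ?thesis .
qed

end

lemma length_Wword[simp]: "length (Wword u n) = n" by (simp add: Wword_def)

lemma tree_Suc: "cgr_tree u (Suc n) = insert (take (LEAST k. 1 \<le> k \<and> take k (Wword u (Suc n)) \<notin> cgr_tree u n) (Wword u (Suc n))) (cgr_tree u n)"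
  by (simp add: Let_def)

declare cgr_tree.simps(2)[simp del]

lemma tree_root: "[] \<in> cgr_tree u n"
  by (induction n) (auto simp: tree_Suc)

lemma tree_mono_Suc: "cgr_tree u n \<subseteq> cgr_tree u (Suc n)"
  by (auto simp: tree_Suc)

lemma tree_mono: "m \<le> n \<Longrightarrow> cgr_tree u m \<subseteq> cgr_tree u n"
proof (induction n rule: dec_induct)
  case (step n) then show ?case using tree_mono_Suc by blast
qed simp

lemma tree_finite: "finite (cgr_tree u n)"
  by (induction n) (auto simp: tree_Suc)

lemma tree_node: "w \<in> cgr_tree u n \<Longrightarrow> w = [] \<or> (\<exists>m\<in>{1..n}. \<exists>k. w = take k (Wword u m))"
proof (induction n arbitrary: w)
  case 0 then show ?case by simp
next
  case (Suc n)
  then show ?case unfolding tree_Suc by (auto, force)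
qed

lemma tree_length: "w \<in> cgr_tree u n \<Longrightarrow> length w \<le> n"
  using tree_node[of w u n] by auto

lemma tree_prefix: "w \<in> cgr_tree u n \<Longrightarrow> take k w \<in> cgr_tree u n"
proof (induction n arbitrary: w k)
  case 0 then show ?case by simp
next
  case (Suc n)
  define W where "W = Wword u (Suc n)"
  define P where "P = (\<lambda>k. 1 \<le> k \<and> take k W \<notin> cgr_tree u n)"
  define k0 where "k0 = (LEAST k. P k)"
  have TS: "cgr_tree u (Suc n) = insert (take k0 W) (cgr_tree u n)"
    unfolding tree_Suc k0_def P_def W_def ..
  show ?case
  proof (cases "w \<in> cgr_tree u n")
    case True then show ?thesis using Suc.IH tree_mono_Suc by blast
  next
    case False
    then have w: "w = take k0 W" using Suc.prems TS by auto
    have "take (min k k0) W \<in> cgr_tree u (Suc n)"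
    proof (cases "k0 \<le> k")
      case True then show ?thesis using Suc.prems w by simp
    next
      case False
      then have kk: "min k k0 = k" "k < k0" by auto
      show ?thesis
      proof (cases "k = 0")
        case True then show ?thesis using tree_root by simp
      next
        case k0': False
        have "take k W \<in> cgr_tree u n"
        proof (cases "\<exists>k. P k")
          case True
          have "\<not> P k" using not_less_Least[of k P] kk(2) unfolding k0_def by blast
          then show ?thesis using k0' by (simp add: P_def)
        next
          case False then show ?thesis using k0' by (auto simp: P_def)
        qed
        then show ?thesis using kk tree_mono_Suc by auto
      qed
    qed
    then show ?thesis using w by (simp add: min.commute)
  qed
qed

lemma tree_insert:
  assumes t: "t \<ge> 1" and j: "j \<ge> 1" and H: "take (j-1) (Wword u t) \<in> cgr_tree u (t-1)"
  shows "take j (Wword u t) \<in> cgr_tree u t"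
proof -
  obtain n where n: "t = Suc n" using t by (cases t) auto
  define W where "W = Wword u (Suc n)"
  define P where "P = (\<lambda>k. 1 \<le> k \<and> take k W \<notin> cgr_tree u n)"
  define k0 where "k0 = (LEAST k. P k)"
  have TS: "cgr_tree u (Suc n) = insert (take k0 W) (cgr_tree u n)"
    unfolding tree_Suc k0_def P_def W_def ..
  show ?thesis
  proof (cases "take j W \<in> cgr_tree u n")
    case True then show ?thesis using tree_mono_Suc n W_def by blast
  next
    case False
    then have Pj: "P j" using j by (simp add: P_def)
    then have Pk0: "P k0" unfolding k0_def by (rule LeastI)
    have "k0 \<le> j" using Pj unfolding k0_def by (rule Least_le)
    moreover have "\<not> k0 < j"
    proof
      assume "k0 < j"
      then have "take k0 W = take k0 (take (j-1) W)" by simp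
      then have "take k0 W \<in> cgr_tree u n" using tree_prefix[OF H[unfolded n]] W_def by simp
      then show False using Pk0 by (simp add: P_def)
    qed
    ultimately have "k0 = j" by simp
    then show ?thesis using TS n W_def by simp
  qed
qed

lemma Xn_finite: "finite {k. sprefix s k \<in> cgr_tree u n}"
proof (rule finite_subset[of _ "{..n}"])
  show "{k. sprefix s k \<in> cgr_tree u n} \<subseteq> {..n}"
    using tree_length by (fastforce simp: sprefix_def)
qed simp

lemma sprefix0: "sprefix s 0 = []" by (simp add: sprefix_def)

lemma Xn_ge: "sprefix s K \<in> cgr_tree u n \<Longrightarrow> K \<le> Xn u n s"
  unfolding Xn_def by (rule Max_ge[OF Xn_finite]) simp

lemma Xn_occ:
  assumes "K \<le> Xn u n s" "K \<ge> 1"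
  shows "\<exists>m. K \<le> m \<and> m \<le> n \<and> take K (Wword u m) = sprefix s K"
proof -
  let ?S = "{k. sprefix s k \<in> cgr_tree u n}"
  have "0 \<in> ?S" using tree_root by (simp add: sprefix0)
  then have "Xn u n s \<in> ?S" unfolding Xn_def by (intro Max_in[OF Xn_finite]) auto
  then obtain k where k: "K \<le> k" "sprefix s k \<in> cgr_tree u n" using assms(1) by blast
  then have "sprefix s k \<noteq> []" using assms(2) by (auto simp: sprefix_def)
  then obtain m k' where m: "m \<in> {1..n}" "sprefix s k = take k' (Wword u m)"
    using tree_node[OF k(2)] by blast
  have "length (sprefix s k) = length (take k' (Wword u m))" using m(2) by simp
  then have lk: "k = min k' m" by (simp add: sprefix_def)
  have "sprefix s K = take K (sprefix s k)" using k(1) by (simp add: sprefix_def take_map)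
  also have "\<dots> = take K (Wword u m)"
  proof -
    have "K \<le> k'" using lk k(1) by simp
    then show ?thesis using m(2) by simp
  qed
  finally show ?thesis using m(1) lk k(1) by (intro exI[of _ m]) auto
qed

lemma chain:
  assumes "\<And>j. j \<in> {1..K} \<Longrightarrow> \<exists>t. b (j-1) < t \<and> t \<le> b j \<and> j \<le> t \<and> take j (Wword u t) = sprefix s j"
  shows "j \<le> K \<Longrightarrow> sprefix s j \<in> cgr_tree u (b j)"
proof (induction j)
  case 0 then show ?case using tree_root by (simp add: sprefix0)
next
  case (Suc j)
  then have IH: "sprefix s j \<in> cgr_tree u (b j)" by simp
  obtain t where t: "b j < t" "t \<le> b (Suc j)" "Suc j \<le> t" "take (Suc j) (Wword u t) = sprefix s (Suc j)"
    using assms[of "Suc j"] Suc.prems by auto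
  have "take j (Wword u t) = take j (take (Suc j) (Wword u t))" by simp
  also have "\<dots> = sprefix s j" using t(4) by (simp add: sprefix_def take_map)
  moreover have "b j \<le> t - 1" using t(1) by simp
  ultimately have "take (Suc j - 1) (Wword u t) \<in> cgr_tree u (t - 1)"
    using IH tree_mono[of "b j" "t-1" u] by auto
  then have "take (Suc j) (Wword u t) \<in> cgr_tree u t" by (intro tree_insert) (use t in auto)
  then show ?case using t tree_mono by auto
qed

lemma occ_to_time:
  assumes "occ (rev (sprefix s j)) (map (\<lambda>i. u (a+1+i)) [0..<B])" "j \<ge> 1"
  shows "\<exists>t. a < t \<and> t \<le> a + B \<and> j \<le> t \<and> take j (Wword u t) = sprefix s j"
proof -
  let ?ys = "map (\<lambda>i. u (a+1+i)) [0..<B]"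
  obtain k where k: "k + j \<le> B" "take j (drop k ?ys) = rev (sprefix s j)"
    using assms(1) unfolding occ_def by (auto simp: sprefix_def)
  have "take j (Wword u (a+k+j)) = sprefix s j"
    unfolding list_eq_iff_nth_eq
  proof (intro conjI allI impI)
    show "length (take j (Wword u (a + k + j))) = length (sprefix s j)" by (simp add: sprefix_def)
  next
    fix i assume "i < length (take j (Wword u (a + k + j)))"
    then have i: "i < j" by simp
    have "take j (drop k ?ys) ! (j - 1 - i) = rev (sprefix s j) ! (j - 1 - i)" using k(2) by simp
    moreover have "take j (drop k ?ys) ! (j - 1 - i) = u (a + k + j - i)"
    proof -
      have "[0..<B] ! (k + j - Suc i) = k + j - Suc i" using i k(1) by simp
      moreover have "Suc (a + (k + j - Suc i)) = a + k + j - i" using i by simp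
      ultimately show ?thesis using i k(1) by simp
    qed
    moreover have "rev (sprefix s j) ! (j - 1 - i) = s (Suc i)"
      using i by (simp add: rev_nth sprefix_def)
    ultimately show "take j (Wword u (a + k + j)) ! i = sprefix s j ! i"
      using i by (simp add: Wword_def sprefix_def)
  qed
  then show ?thesis using k(1) assms(2) by (intro exI[of _ "a+k+j"]) auto
qed

lemma time_to_window:
  assumes "take K (Wword u m) = sprefix s K" "K \<le> m"
  shows "map (\<lambda>i. u ((m-K)+1+i)) [0..<K] = rev (sprefix s K)"
  unfolding list_eq_iff_nth_eq
proof (intro conjI allI impI)
  fix i assume "i < length (map (\<lambda>i. u (m - K + 1 + i)) [0..<K])"
  then have i: "i < K" by simp
  have "take K (Wword u m) ! (K - 1 - i) = sprefix s K ! (K - 1 - i)" using assms(1) by simp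
  moreover have "[0..<m] ! (K - Suc i) = K - Suc i" using i assms(2) by simp
  ultimately have "u (m - (K - 1 - i)) = s (Suc (K - 1 - i))"
    using i assms(2) by (simp add: Wword_def sprefix_def)
  moreover have "m - (K - 1 - i) = m - K + 1 + i" using i assms(2) by simp
  ultimately show "map (\<lambda>i. u (m - K + 1 + i)) [0..<K] ! i = rev (sprefix s K) ! i"
    using i by (simp add: rev_nth sprefix_def Suc_diff_Suc)
qed (simp add: sprefix_def)

definition vv :: "(nat \<Rightarrow> nucl) \<Rightarrow> nat \<Rightarrow> nucl list" where "vv s j = rev (sprefix s j)"

lemma length_vv[simp]: "length (vv s j) = j" by (simp add: vv_def sprefix_def)

lemma vv_Suc: "vv s (Suc j) = s (Suc j) # vv s j"
  by (simp add: vv_def sprefix_def)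

context mchain begin

lemma pi_le1: "piw p Q v \<le> 1"
proof -
  have "v \<in> LL (length v)" by (simp add: LL_def)
  then have "piw p Q v \<le> (\<Sum>xs\<in>LL (length v). piw p Q xs)"
    by (rule member_le_sum) (simp_all add: pi_nonneg)
  then show ?thesis using Sm_pi[of "length v"] by (simp add: Sm_def)
qed

lemma mpow_le1: "mpow Q n a b \<le> 1"
proof -
  have "mpow Q n a b \<le> Sm n (cw Q a)"
    unfolding mpow_Sm by (rule Sm_mono) (auto simp: cw_nonneg mult_left_le_one_le)
  then show ?thesis by (simp add: Sm_cw)
qed

lemma pi_vv_mono: "j \<le> K \<Longrightarrow> piw p Q (vv s K) \<le> piw p Q (vv s j)"
proof (induction K rule: dec_induct)
  case (step K)
  show ?case
  proof (cases "K = 0")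
    case True
    then show ?thesis using pi_le1[of "vv s (Suc K)"] step by (simp add: vv_def sprefix_def)
  next
    case False
    have "length (vv s K) = K" by simp
    have "vv s K \<noteq> []"
    proof
      assume "vv s K = []"
      then have "length (vv s K) = 0" by simp
      then show False using False by simp
    qed
    then have "piw p Q (vv s (Suc K)) \<le> piw p Q (vv s K)" unfolding vv_Suc by (rule pi_cons_le)
    then show ?thesis using step by simp
  qed
qed simp

lemma noocc_bound:
  assumes Nf: "\<And>a b. 1 \<le> Nf a b \<and> Nf a b \<le> D \<and> \<delta> \<le> mpow Q (Nf a b) a b" and d0: "0 \<le> \<delta>"
    and v: "v \<noteq> []" and B: "D + length v \<le> B"
  shows "Sm B (\<lambda>ys. cw Q a ys * of_bool (\<not> occ v ys)) \<le> 1 - \<delta> * piw p Q v"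
proof -
  let ?b = "hd v"
  have vv: "v = ?b # tl v" using v by simp
  have "\<delta> * piw p Q v \<le> mpow Q (Nf a ?b) a ?b * cw Q ?b (tl v)"
  proof (rule mult_mono)
    show "\<delta> \<le> mpow Q (Nf a ?b) a ?b" using Nf[of a ?b] by blast
    show "piw p Q v \<le> cw Q ?b (tl v)" using pi_le_cw[of ?b "tl v"] vv by simp
    show "0 \<le> mpow Q (Nf a ?b) a ?b" using Nf[of a ?b] d0 by linarith
    show "0 \<le> piw p Q v" by (rule pi_nonneg)
  qed
  also have "\<dots> \<le> Sm B (\<lambda>ys. cw Q a ys * of_bool (occ v ys))"
    using Nf[of a ?b] B v by (intro occ_lower) auto
  finally show ?thesis by (simp add: noocc_eq)
qed

end

context mproc begin

definition Aup :: "(nat \<Rightarrow> nucl) \<Rightarrow> nat \<Rightarrow> nat \<Rightarrow> 'w set" where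
  "Aup s K N = {\<omega>\<in>space M. \<exists>a<N. wl U \<omega> a K = vv s K}"

lemma Aup_sets: "Aup s K N \<in> sets M"
proof -
  have "Aup s K N = (\<Union>a<N. {\<omega>\<in>space M. wl U \<omega> a K = vv s K})" by (auto simp: Aup_def)
  also have "\<dots> \<in> sets M" by (intro sets.finite_UN) (auto intro: cyl_sets)
  finally show ?thesis .
qed

lemma Aup_measure: "K \<ge> 1 \<Longrightarrow> measure M (Aup s K N) \<le> N * piw p Q (vv s K)"
proof -
  assume K: "K \<ge> 1"
  have "Aup s K N = (\<Union>a\<in>{..<N}. {\<omega>\<in>space M. wl U \<omega> a K = vv s K})" by (auto simp: Aup_def)
  then have "measure M (Aup s K N) \<le> (\<Sum>a\<in>{..<N}. measure M {\<omega>\<in>space M. wl U \<omega> a K = vv s K})"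
    by (simp only:) (rule measure_UNION_le, auto intro: cyl_sets)
  also have "\<dots> = (\<Sum>a\<in>{..<N}. piw p Q (vv s K))"
  proof (rule sum.cong[OF refl])
    fix a
    have "measure M {\<omega>\<in>space M. wl U \<omega> a K = vv s K} = Sm K (\<lambda>ys. piw p Q ys * of_bool (ys = vv s K))"
      by (rule prob_window[OF K])
    also have "\<dots> = piw p Q (vv s K)"
      using Sm_single[of "vv s K" K "piw p Q"] by (simp add: of_bool_def if_distrib cong: if_cong)
    finally show "measure M {\<omega>\<in>space M. wl U \<omega> a K = vv s K} = piw p Q (vv s K)" .
  qed
  finally show ?thesis by simp
qed

lemma Aup_Xn:
  assumes "\<omega> \<in> space M" "\<omega> \<notin> Aup s K N" "K \<ge> 1" "n \<le> N"
  shows "Xn (\<lambda>i. U i \<omega>) n s < K"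
proof (rule ccontr)
  assume "\<not> Xn (\<lambda>i. U i \<omega>) n s < K"
  then obtain m where m: "K \<le> m" "m \<le> n" "take K (Wword (\<lambda>i. U i \<omega>) m) = sprefix s K"
    using Xn_occ[of K "\<lambda>i. U i \<omega>" n s] assms(3) by auto
  have "wl U \<omega> (m-K) K = vv s K"
    using time_to_window[OF m(3) m(1)] by (simp add: wl_def vv_def)
  moreover have "m - K < N" using m assms by linarith
  ultimately show False using assms(1,2) unfolding Aup_def by blast
qed

definition Rblk :: "nucl list \<Rightarrow> nat \<Rightarrow> nat \<Rightarrow> nat \<Rightarrow> nucl list \<Rightarrow> bool" where
  "Rblk v B t0 m xs = (\<forall>i<m. \<not> occ v (take B (drop (t0 + i*B) xs)))"

definition Bad :: "(nat \<Rightarrow> nucl) \<Rightarrow> nat \<Rightarrow> nat \<Rightarrow> nat \<Rightarrow> nat \<Rightarrow> 'w set" where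
  "Bad s K L B m = (\<Union>j\<in>{1..K}. {\<omega>\<in>space M. \<forall>i<m. \<not> occ (vv s j) (wl U \<omega> (1 + (j-1)*L + i*B) B)})"

lemma Bad_j_eq:
  "{\<omega>\<in>space M. \<forall>i<m. \<not> occ v (wl U \<omega> (t0 + i*B) B)}
   = {\<omega>\<in>space M. Rblk v B t0 m (wl U \<omega> 0 (t0 + m*B))}"
proof -
  have "take B (drop (t0 + i*B) (wl U \<omega> 0 (t0 + m*B))) = wl U \<omega> (t0 + i*B) B" if "i < m" for i \<omega>
  proof (rule wl_take_drop)
    have "Suc i * B \<le> m * B" by (rule mult_le_mono1) (use that in simp)
    then show "t0 + i * B + B \<le> t0 + m * B" by simp
  qed
  then have "(\<forall>i<m. \<not> occ v (wl U \<omega> (t0+i*B) B)) \<longleftrightarrow> Rblk v B t0 m (wl U \<omega> 0 (t0+m*B))" for \<omega>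
    unfolding Rblk_def by simp
  then show ?thesis by blast
qed

lemma Bad_j_sets: "{\<omega>\<in>space M. \<forall>i<m. \<not> occ v (wl U \<omega> (t0 + i*B) B)} \<in> sets M"
  unfolding Bad_j_eq by (rule ev_sets)

lemma Bad_sets: "Bad s K L B m \<in> sets M"
  unfolding Bad_def by (rule sets.finite_UN) (simp, rule Bad_j_sets)

lemma Bad_measure:
  assumes Nf: "\<And>a b. 1 \<le> Nf a b \<and> Nf a b \<le> D \<and> \<delta> \<le> mpow Q (Nf a b) a b" and d0: "0 \<le> \<delta>"
    and B: "D + K \<le> B"
  shows "measure M (Bad s K L B m) \<le> K * (1 - \<delta> * piw p Q (vv s K))^m"
proof -
  have "measure M (Bad s K L B m) \<le> (\<Sum>j\<in>{1..K}. measure M {\<omega>\<in>space M. \<forall>i<m. \<not> occ (vv s j) (wl U \<omega> (1 + (j-1)*L + i*B) B)})"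
    unfolding Bad_def by (rule measure_UNION_le) (simp, rule Bad_j_sets)
  also have "\<dots> \<le> (\<Sum>j\<in>{1..K}. (1 - \<delta> * piw p Q (vv s K))^m)"
  proof (rule sum_mono)
    fix j assume j: "j \<in> {1..K}"
    define t0 where "t0 = 1 + (j-1)*L"
    define v where "v = vv s j"
    have "length v = j" by (simp add: v_def)
    then have v: "v \<noteq> []" using j by auto
    have "measure M {\<omega>\<in>space M. \<forall>i<m. \<not> occ v (wl U \<omega> (t0 + i*B) B)}
        = Sm (t0 + m*B) (\<lambda>xs. piw p Q xs * of_bool (\<forall>i<m. \<not> occ v (take B (drop (t0 + i*B) xs))))"
      unfolding Bad_j_eq prob_list by (simp add: Rblk_def)
    also have "\<dots> \<le> (1 - \<delta> * piw p Q v)^m"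
    proof (rule block)
      show "1 \<le> t0" by (simp add: t0_def)
      fix a
      show "Sm B (\<lambda>ys. cw Q a ys * of_bool (\<not> occ v ys)) \<le> 1 - \<delta> * piw p Q v"
        using j B by (intro noocc_bound[OF Nf d0 v]) (auto simp: v_def)
    qed
    also have "\<dots> \<le> (1 - \<delta> * piw p Q (vv s K))^m"
    proof (rule power_mono)
      have "\<delta> \<le> 1" using Nf[of A A] mpow_le1[of "Nf A A" A A] by linarith
      then have "\<delta> * piw p Q v \<le> 1" using pi_le1[of v] pi_nonneg[of v] d0 by (simp add: mult_le_one)
      then show "0 \<le> 1 - \<delta> * piw p Q v" by simp
      show "1 - \<delta> * piw p Q v \<le> 1 - \<delta> * piw p Q (vv s K)"
        using pi_vv_mono[of j K] j d0 by (simp add: v_def mult_left_mono)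
    qed
    finally show "measure M {\<omega>\<in>space M. \<forall>i<m. \<not> occ (vv s j) (wl U \<omega> (1 + (j-1)*L + i*B) B)}
       \<le> (1 - \<delta> * piw p Q (vv s K))^m" by (simp add: t0_def v_def)
  qed
  also have "\<dots> = K * (1 - \<delta> * piw p Q (vv s K))^m" by simp
  finally show ?thesis .
qed

lemma Bad_Xn:
  assumes "\<omega> \<in> space M" "\<omega> \<notin> Bad s K L B m" "m * B \<le> L" "1 + K * L \<le> n"
  shows "K \<le> Xn (\<lambda>i. U i \<omega>) n s"
proof -
  let ?u = "\<lambda>i. U i \<omega>"
  have "sprefix s K \<in> cgr_tree ?u ((\<lambda>j. 1 + j * L) K)"
  proof (rule chain[where K=K and b="\<lambda>j. 1 + j*L" and u="?u" and s=s and j=K])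
    fix j assume j: "j \<in> {1..K}"
    have "\<exists>i<m. occ (vv s j) (wl U \<omega> (1 + (j-1)*L + i*B) B)"
      using assms(1,2) j unfolding Bad_def by blast
    then obtain i where i: "i < m" "occ (vv s j) (wl U \<omega> (1 + (j-1)*L + i*B) B)" by blast
    obtain t where t: "1 + (j-1)*L + i*B < t" "t \<le> 1 + (j-1)*L + i*B + B" "j \<le> t"
        "take j (Wword ?u t) = sprefix s j"
      using occ_to_time[of s j ?u "1 + (j-1)*L + i*B" B] i(2) j by (auto simp: wl_def vv_def)
    have "Suc i * B \<le> m * B" by (rule mult_le_mono1) (use i in simp)
    then have "i * B + B \<le> L" using assms(3) by simp
    moreover have "(j - 1) * L + L = j * L" using j by (cases j) auto
    ultimately have "t \<le> 1 + j * L" using t(2) by linarith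
    then show "\<exists>t. 1 + (j - 1) * L < t \<and> t \<le> 1 + j * L \<and> j \<le> t \<and> take j (Wword ?u t) = sprefix s j"
      using t by (intro exI[of _ t]) auto
  qed simp
  then have "sprefix s K \<in> cgr_tree ?u n" using tree_mono[OF assms(4)] by auto
  then show ?thesis by (rule Xn_ge)
qed

end

lemma asym_facts:
  fixes e d h D \<epsilon> J :: real assumes "\<epsilon> > 0" "\<epsilon> \<le> 1/2" "d > 0" "h > 0" "D \<ge> 0" "e > 0"
  shows "eventually (\<lambda>x. ln x / h * exp (-(d * x powr (-(1-\<epsilon>/2)) * ((((x-1)/(ln x / h) - 1)/(D + ln x / h)) - 1))) \<le> 1 / x^2) at_top"
    "eventually (\<lambda>x. (((x-1)/(ln x / h) - 1)/(D + ln x / h)) - 1 \<ge> 0) at_top"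
    "eventually (\<lambda>x. (1-\<epsilon>) * ln x / h \<ge> J + 1) at_top"
    "eventually (\<lambda>x. 1 / ln x \<le> e/2) at_top"
    "eventually (\<lambda>x::real. x \<ge> 2) at_top"
  using assms by real_asymp+

lemma ev_nat: "eventually P at_top \<Longrightarrow> eventually (\<lambda>n. P (real n)) sequentially"
  using filterlim_real_sequentially unfolding filterlim_iff by blast

lemma real_div_ge: "b > 0 \<Longrightarrow> real (a div b) \<ge> real a / real b - 1"
proof -
  assume b: "b > 0"
  have "a = b * (a div b) + a mod b" by simp
  then have "real a = real b * real (a div b) + real (a mod b)" by (metis of_nat_add of_nat_mult)
  moreover have "real (a mod b) < real b" using b by simp
  ultimately have "real a < real b * (real (a div b) + 1)" by (simp add: algebra_simps)
  then have "real a / real b < real (a div b) + 1" using b by (simp add: divide_less_eq mult.commute)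
  then show ?thesis by simp
qed

locale mainloc = mproc p Q M U for p Q M U +
  fixes s :: "nat \<Rightarrow> nucl" and h :: real
  assumes irr: "irreducible_matrix Q"
    and lim: "(\<lambda>n. (1 / real n) * ln (1 / pword M U s n)) \<longlonglongrightarrow> h"
    and hpos: "h > 0"
begin

abbreviation "pw j \<equiv> piw p Q (vv s j)"

lemma pw_eq: "pword M U s j = pw j"
  by (simp add: pword_pi vv_def)

lemma pw_bounds:
  assumes eta: "\<eta> > 0"
  shows "\<exists>J. \<forall>j\<ge>J. exp (- (real j * (h + \<eta>))) \<le> pw j \<and> pw j \<le> exp (- (real j * (h - \<eta>)))"
proof -
  have "min \<eta> (h/2) > 0" using eta hpos by simp
  then obtain no where no: "\<And>n. n \<ge> no \<Longrightarrow> norm ((1 / real n) * ln (1 / pword M U s n) - h) < min \<eta> (h/2)"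
    using lim unfolding LIMSEQ_iff by blast
  show ?thesis
  proof (intro exI[of _ "max no 1"] allI impI)
    fix j assume j: "max no 1 \<le> j"
    then have j1: "real j \<ge> 1" and jno: "j \<ge> no" by auto
    have H: "\<bar>(1 / real j) * ln (1 / pw j) - h\<bar> < min \<eta> (h/2)" using no[OF jno] by (simp add: pw_eq)
    have q0: "0 \<le> pw j" by (rule pi_nonneg)
    have qpos: "0 < pw j"
    proof (rule ccontr)
      assume "\<not> 0 < pw j"
      then have "pw j = 0" using q0 by simp
      then show False using H hpos by simp
    qed
    have "ln (1 / pw j) = - ln (pw j)" using qpos by (simp add: ln_div)
    then have H2: "\<bar>- ln (pw j) / real j - h\<bar> < \<eta>" using H by simp
    have "- ln (pw j) < real j * (h + \<eta>)" "real j * (h - \<eta>) < - ln (pw j)"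
    proof -
      have a: "- ln (pw j) / real j < h + \<eta>" "h - \<eta> < - ln (pw j) / real j" using H2 by linarith+
      have jp: "real j > 0" using j1 by simp
      from a(1) have "- ln (pw j) < (h + \<eta>) * real j" by (subst (asm) pos_divide_less_eq[OF jp])
      then show "- ln (pw j) < real j * (h + \<eta>)" by (simp add: mult.commute)
      from a(2) have "(h - \<eta>) * real j < - ln (pw j)" by (subst (asm) pos_less_divide_eq[OF jp])
      then show "real j * (h - \<eta>) < - ln (pw j)" by (simp add: mult.commute)
    qed
    then have "exp (- (real j * (h + \<eta>))) \<le> exp (ln (pw j))" "exp (ln (pw j)) \<le> exp (- (real j * (h - \<eta>)))"
      by simp_all
    then show "exp (- (real j * (h + \<eta>))) \<le> pw j \<and> pw j \<le> exp (- (real j * (h - \<eta>)))"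
      using qpos by simp
  qed
qed

lemma upper:
  assumes e: "e > 0"
  shows "AE \<omega> in M. eventually (\<lambda>n. real (Xn (\<lambda>i. U i \<omega>) n s) / ln (real n) \<le> 1/h + e) sequentially"
proof -
  interpret prob_space M by (rule prob)
  define \<epsilon> where "\<epsilon> = h * e / 2"
  define \<eta> where "\<eta> = h * \<epsilon> / (2 * (1 + \<epsilon>))"
  define c where "c = (1 + \<epsilon>) * ln 2 / h"
  define K where "K = (\<lambda>j::nat. nat \<lceil>c * (real j + 1)\<rceil>)"
  define r where "r = exp (- (ln 2 * \<epsilon> / 2))"
  have \<epsilon>0: "\<epsilon> > 0" using e hpos by (simp add: \<epsilon>_def)
  have \<eta>0: "\<eta> > 0" using \<epsilon>0 hpos by (simp add: \<eta>_def)
  have \<eta>h: "(1 + \<epsilon>) * (h - \<eta>) / h = 1 + \<epsilon>/2"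
  proof -
    have "h - \<eta> = h * (2 + \<epsilon>) / (2 * (1 + \<epsilon>))"
      using \<epsilon>0 hpos by (simp add: \<eta>_def field_simps)
    then show ?thesis using \<epsilon>0 hpos by (simp add: field_simps)
  qed
  have c0: "c > 0" using \<epsilon>0 hpos by (simp add: c_def)
  have Kge: "real (K j) \<ge> c * (real j + 1)" for j
    unfolding K_def by linarith
  have Kle: "real (K j) < c * (real j + 1) + 1" for j
    unfolding K_def using c0 by (simp add: of_nat_nat) linarith
  have K1: "K j \<ge> 1" for j
  proof -
    have "c * (real j + 1) > 0" using c0 by simp
    moreover have "real_of_int \<lceil>c * (real j + 1)\<rceil> \<ge> c * (real j + 1)" by (rule le_of_int_ceiling)
    ultimately have "real_of_int \<lceil>c * (real j + 1)\<rceil> > 0" by linarith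
    then have "\<lceil>c * (real j + 1)\<rceil> \<ge> 1" by linarith
    then show ?thesis unfolding K_def by (subst le_nat_iff) auto
  qed
  obtain J0 where J0: "\<And>j. j \<ge> J0 \<Longrightarrow> pw j \<le> exp (- (real j * (h - \<eta>)))"
    using pw_bounds[OF \<eta>0] by blast
  define A where "A = (\<lambda>j. Aup s (K j) (2^(j+1)))"
  have r1: "r < 1" "r > 0" using \<epsilon>0 by (simp_all add: r_def)
  have bound: "measure M (A j) \<le> r^(j+1)" if "J0 \<le> K j" for j
  proof -
    have "measure M (A j) \<le> 2^(j+1) * pw (K j)"
      unfolding A_def using Aup_measure[OF K1[of j], of s "2^(j+1)"] by simp
    also have "\<dots> \<le> 2^(j+1) * exp (- (real (K j) * (h - \<eta>)))"
      using J0[OF that] by (intro mult_left_mono) auto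
    also have "\<dots> \<le> exp ((real j + 1) * ln 2) * exp (- ((real j + 1) * ln 2 * (1 + \<epsilon>/2)))"
    proof (intro mult_mono)
      have "exp (real (j+1) * ln 2) = exp (ln 2) ^ (j+1)" by (rule exp_of_nat_mult)
      then have "exp ((real j + 1) * ln 2) = (2::real)^(j+1)" by (simp add: add.commute)
      then show "(2::real)^(j+1) \<le> exp ((real j + 1) * ln 2)" by simp
      have "h - \<eta> > 0"
      proof -
        have "\<epsilon> / (2*(1+\<epsilon>)) < 1" using \<epsilon>0 by (simp add: divide_less_eq)
        then have "h * (\<epsilon> / (2*(1+\<epsilon>))) < h * 1" using hpos by (rule mult_strict_left_mono)
        then have "\<eta> < h" by (simp add: \<eta>_def)
        then show ?thesis by simp
      qed
      then have "c * (real j + 1) * (h - \<eta>) \<le> real (K j) * (h - \<eta>)"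
        using Kge[of j] by (intro mult_right_mono) auto
      moreover have "c * (real j + 1) * (h - \<eta>) = (real j + 1) * ln 2 * ((1 + \<epsilon>) * (h - \<eta>) / h)"
        using hpos by (simp add: c_def field_simps)
      ultimately show "exp (- (real (K j) * (h - \<eta>))) \<le> exp (- ((real j + 1) * ln 2 * (1 + \<epsilon> / 2)))"
        using \<eta>h by simp
    qed auto
    also have "\<dots> = exp (real (j+1) * (- (ln 2 * \<epsilon> / 2)))"
      by (simp add: exp_add[symmetric] field_simps)
    also have "\<dots> = r^(j+1)" unfolding r_def by (rule exp_of_nat_mult)
    finally show ?thesis .
  qed
  have evK: "eventually (\<lambda>j. J0 \<le> K j) sequentially"
  proof (rule eventually_sequentiallyI[of "nat \<lceil>real J0 / c\<rceil>"])
    fix j assume "nat \<lceil>real J0 / c\<rceil> \<le> j"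
    then have "real J0 / c \<le> real j" by linarith
    then have "real J0 \<le> c * real j" using c0 by (simp add: divide_le_eq mult.commute)
    moreover have "c * real j \<le> c * (real j + 1)" using c0 by simp
    ultimately have "real J0 \<le> real (K j)" using Kge[of j] by linarith
    then show "J0 \<le> K j" by simp
  qed
  have summ: "summable (\<lambda>j. measure M (A j))"
  proof (rule summable_comparison_test_ev)
    show "eventually (\<lambda>j. norm (measure M (A j)) \<le> r^(j+1)) sequentially"
      using evK by eventually_elim (use bound in auto)
    show "summable (\<lambda>j. r^(j+1))" using r1 by (simp add: summable_mult)
  qed
  have Asets: "A j \<in> sets M" for j unfolding A_def by (rule Aup_sets)
  have "AE \<omega> in M. eventually (\<lambda>j. \<omega> \<in> space M - A j) sequentially"
    by (rule borel_cantelli_AE1[OF Asets]) (auto simp: summ less_top[symmetric])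
  then show ?thesis
  proof (rule eventually_mono)
    fix \<omega> assume "eventually (\<lambda>j. \<omega> \<in> space M - A j) sequentially"
    then obtain J1 where J1: "\<And>j. j \<ge> J1 \<Longrightarrow> \<omega> \<in> space M - A j"
      unfolding eventually_sequentially by blast
    define J where "J = max J1 (nat \<lceil>(2/h + e) / e\<rceil> + 1)"
    show "eventually (\<lambda>n. real (Xn (\<lambda>i. U i \<omega>) n s) / ln (real n) \<le> 1/h + e) sequentially"
    proof (rule eventually_sequentiallyI[of "2^J"])
      fix n :: nat assume n: "2^J \<le> n"
      moreover have "(1::nat) \<le> 2^J" by simp
      ultimately have "n \<ge> 1" by linarith
      then obtain j where j: "2^j \<le> n" "n < 2^(j+1)" using ex_power_ivl1[of 2 n] by auto
      have jJ: "J \<le> j"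
      proof (rule ccontr)
        assume "\<not> J \<le> j"
        then have "j + 1 \<le> J" by simp
        then have "(2::nat)^(j+1) \<le> 2^J" by (rule power_increasing) simp
        then show False using j n by linarith
      qed
      then have "j \<ge> J1" by (simp add: J_def)
      then have om: "\<omega> \<in> space M" "\<omega> \<notin> A j" using J1 by auto
      have X: "Xn (\<lambda>i. U i \<omega>) n s < K j"
        using Aup_Xn[OF om(1) om(2)[unfolded A_def] K1] j(2) by simp
      then have "real (Xn (\<lambda>i. U i \<omega>) n s) + 1 \<le> real (K j)" by linarith
      then have Xb: "real (Xn (\<lambda>i. U i \<omega>) n s) \<le> c * (real j + 1)" using Kle[of j] by linarith
      have jpos: "real j \<ge> (2/h + e) / e" "real j \<ge> 1" using jJ by (simp_all add: J_def) linarith+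
      have lnb: "ln (real n) \<ge> real j * ln 2"
      proof -
        have "(2::real)^j \<le> real n" using j(1) by (metis of_nat_le_iff of_nat_numeral of_nat_power)
        then have "ln ((2::real) ^ j) \<le> ln (real n)" using \<open>n \<ge> 1\<close> by (subst ln_le_cancel_iff) auto
        then show ?thesis by (simp add: ln_realpow)
      qed
      have l2: "real j * ln 2 > 0" using jpos by simp
      have "real (Xn (\<lambda>i. U i \<omega>) n s) / ln (real n) \<le> c * (real j + 1) / (real j * ln 2)"
        by (rule frac_le) (use Xb lnb l2 c0 in auto)
      also have "\<dots> = (1/h + e/2) + (1/h + e/2) / real j"
      proof -
        have c': "c = (1/h + e/2) * ln 2" using hpos by (simp add: c_def \<epsilon>_def field_simps)
        have "ln (2::real) > 0" "real j > 0" using jpos by simp_all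
        have gen: "\<And>a l x::real. l > 0 \<Longrightarrow> x > 0 \<Longrightarrow> a * l * (x + 1) / (x * l) = a + a / x"
          by (simp add: field_simps)
        show ?thesis unfolding c' by (rule gen) fact+
      qed
      also have "\<dots> \<le> 1/h + e"
      proof -
        have "real j * e \<ge> 2/h + e" using jpos(1) e by (simp add: divide_le_eq)
        then have "1/h + e/2 \<le> e/2 * real j" by (simp add: field_simps)
        then have "(1/h + e/2) / real j \<le> e/2" using jpos(2) by (simp add: divide_le_eq)
        then show ?thesis by linarith
      qed
      finally show "real (Xn (\<lambda>i. U i \<omega>) n s) / ln (real n) \<le> 1/h + e" .
    qed
  qed
qed


lemma irr_consts: "\<exists>Nf D \<delta>. \<delta> > 0 \<and> (\<forall>a b. 1 \<le> Nf a b \<and> Nf a b \<le> D \<and> \<delta> \<le> mpow Q (Nf a b) a b)"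
proof -
  have "\<forall>x. \<exists>n. 0 < n \<and> 0 < mpow Q n (fst x) (snd x)"
    using irr by (simp add: irreducible_matrix_def)
  then obtain f where f: "\<And>x. 0 < f x \<and> 0 < mpow Q (f x) (fst x) (snd x)" by metis
  define D where "D = Max (range f)"
  define \<delta> where "\<delta> = Min (range (\<lambda>x. mpow Q (f x) (fst x) (snd x)))"
  have "\<delta> \<in> range (\<lambda>x. mpow Q (f x) (fst x) (snd x))" unfolding \<delta>_def by (rule Min_in) auto
  then have d0: "\<delta> > 0" using f by auto
  show ?thesis
  proof (intro exI[of _ "\<lambda>a b. f (a,b)"] exI[of _ D] exI[of _ \<delta>] conjI allI d0)
    fix a b
    show "1 \<le> f (a, b)" using f[of "(a,b)"] by simp
    show "f (a, b) \<le> D" unfolding D_def by (rule Max_ge) auto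
    have "Min (range (\<lambda>x. mpow Q (f x) (fst x) (snd x))) \<le> mpow Q (f (a, b)) (fst (a,b)) (snd (a,b))"
      by (rule Min_le) (auto intro!: image_eqI[where x="(a,b)"])
    then show "\<delta> \<le> mpow Q (f (a, b)) a b" unfolding \<delta>_def by simp
  qed
qed

lemma lower:
  assumes e: "e > 0"
  shows "AE \<omega> in M. eventually (\<lambda>n. 1/h - e \<le> real (Xn (\<lambda>i. U i \<omega>) n s) / ln (real n)) sequentially"
proof -
  interpret prob_space M by (rule prob)
  obtain Nf D \<delta> where \<delta>0: "\<delta> > 0" and Nf: "\<And>a b. 1 \<le> Nf a b \<and> Nf a b \<le> D \<and> \<delta> \<le> mpow Q (Nf a b) a b"
    using irr_consts by blast
  have \<delta>1: "\<delta> \<le> 1" using Nf[of A A] mpow_le1[of "Nf A A" A A] by linarith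
  define \<epsilon> where "\<epsilon> = min (h*e/2) (1/2)"
  have \<epsilon>0: "\<epsilon> > 0" "\<epsilon> \<le> 1/2" "\<epsilon> \<le> h*e/2" using e hpos by (auto simp: \<epsilon>_def)
  define \<eta> where "\<eta> = h * \<epsilon> / 2"
  have \<eta>0: "\<eta> > 0" using \<epsilon>0 hpos by (simp add: \<eta>_def)
  obtain J0 where J0: "\<And>j. j \<ge> J0 \<Longrightarrow> exp (- (real j * (h + \<eta>))) \<le> pw j"
    using pw_bounds[OF \<eta>0] by blast
  define \<kappa> where "\<kappa> = (\<lambda>x::real. ln x / h)"
  define K where "K = (\<lambda>n::nat. nat \<lfloor>(1-\<epsilon>) * ln (real n) / h\<rfloor>)"
  define L where "L = (\<lambda>n. (n-1) div K n)"
  define B where "B = (\<lambda>n. D + K n)"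
  define m where "m = (\<lambda>n. L n div B n)"
  define E where "E = (\<lambda>n. Bad s (K n) (L n) (B n) (m n))"
  define lowm where "lowm = (\<lambda>x. ((x-1)/\<kappa> x - 1)/(real D + \<kappa> x) - 1)"
  have D0: "real D \<ge> 0" by simp
  note AF = asym_facts[OF \<epsilon>0(1,2) \<delta>0 hpos D0 e]
  note AF3 = asym_facts(3)[OF \<epsilon>0(1,2) \<delta>0 hpos D0 e, of "real J0"]
  have ev: "eventually (\<lambda>n. \<kappa> (real n) * exp (-(\<delta> * real n powr (-(1-\<epsilon>/2)) * lowm (real n))) \<le> 1 / (real n)^2
      \<and> lowm (real n) \<ge> 0 \<and> (1-\<epsilon>) * ln (real n) / h \<ge> real J0 + 1 \<and> 1 / ln (real n) \<le> e/2 \<and> real n \<ge> 2) sequentially"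
    using ev_nat[OF AF(1)] ev_nat[OF AF(2)] ev_nat[OF AF3] ev_nat[OF AF(4)] ev_nat[OF AF(5)]
    unfolding \<kappa>_def lowm_def by eventually_elim blast
  have KJ: "K n \<ge> J0 + 1" "real (K n) \<le> \<kappa> (real n)" "real (K n) \<ge> (1-\<epsilon>) * ln (real n) / h - 1"
    if "(1-\<epsilon>) * ln (real n) / h \<ge> real J0 + 1" "real n \<ge> 2" for n
  proof -
    let ?y = "(1-\<epsilon>) * ln (real n) / h"
    have y0: "?y \<ge> 0" using that by simp
    have "int (J0 + 1) \<le> \<lfloor>?y\<rfloor>" using that(1) by (simp add: le_floor_iff)
    then show "K n \<ge> J0 + 1" unfolding K_def using nat_mono by fastforce
    have "real (K n) = real_of_int \<lfloor>?y\<rfloor>" unfolding K_def using y0 by simp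
    moreover have "real_of_int \<lfloor>?y\<rfloor> \<le> ?y" by (rule of_int_floor_le)
    moreover have "?y \<le> \<kappa> (real n)"
    proof -
      have "ln (real n) \<ge> 0" using that(2) by simp
      then have "(1-\<epsilon>) * ln (real n) \<le> ln (real n)" using \<epsilon>0 by (simp add: mult_left_le_one_le)
      then show ?thesis unfolding \<kappa>_def using hpos by (simp add: divide_right_mono)
    qed
    ultimately show "real (K n) \<le> \<kappa> (real n)" by linarith
    have "real_of_int \<lfloor>?y\<rfloor> > ?y - 1" by (rule real_of_int_floor_gt_diff_one)
    then show "real (K n) \<ge> ?y - 1" using \<open>real (K n) = real_of_int \<lfloor>?y\<rfloor>\<close> by linarith
  qed
  have bound: "measure M (E n) \<le> 1 / (real n)^2"
    if H: "\<kappa> (real n) * exp (-(\<delta> * real n powr (-(1-\<epsilon>/2)) * lowm (real n))) \<le> 1 / (real n)^2"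
      "lowm (real n) \<ge> 0" "(1-\<epsilon>) * ln (real n) / h \<ge> real J0 + 1" "real n \<ge> 2" for n
  proof -
    let ?x = "real n"
    note K = KJ[OF H(3) H(4)]
    have K1: "K n \<ge> 1" using K(1) by simp
    have Kpos: "real (K n) > 0" using K1 by simp
    have lnx: "ln ?x > 0" using H(4) by simp
    let ?pw = "pw (K n)"
    let ?lp = "?x powr (-(1-\<epsilon>/2))"
    have lp0: "?lp \<ge> 0" by simp
    have pwlow: "?lp \<le> ?pw"
    proof -
      have "real (K n) * (h + \<eta>) \<le> (1-\<epsilon>/2) * ln ?x"
      proof -
        have "real (K n) * (h + \<eta>) \<le> (1-\<epsilon>) * ln ?x / h * (h + \<eta>)"
          using K(3) KJ[OF H(3) H(4)] hpos \<eta>0 that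
          by (intro mult_right_mono) (auto simp: K_def)
        also have "\<dots> = (1-\<epsilon>) * (1 + \<epsilon>/2) * ln ?x" using hpos by (simp add: \<eta>_def field_simps)
        also have "\<dots> \<le> (1-\<epsilon>/2) * ln ?x"
        proof (rule mult_right_mono)
          show "(1-\<epsilon>) * (1 + \<epsilon>/2) \<le> 1-\<epsilon>/2" using \<epsilon>0 by (simp add: algebra_simps)
        qed (use lnx in simp)
        finally show ?thesis .
      qed
      then have "exp (-((1-\<epsilon>/2) * ln ?x)) \<le> exp (- (real (K n) * (h + \<eta>)))" by simp
      also have "\<dots> \<le> ?pw" using J0 K(1) by simp
      finally have "exp (-((1-\<epsilon>/2) * ln ?x)) \<le> ?pw" .
      moreover have "?lp = exp (-((1-\<epsilon>/2) * ln ?x))"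
        using H(4) by (simp add: powr_def algebra_simps)
      ultimately show ?thesis by simp
    qed
    have mlow: "lowm ?x \<le> real (m n)"
    proof -
      have "real (L n) \<ge> real (n-1) / real (K n) - 1" unfolding L_def by (rule real_div_ge) (use K1 in simp)
      moreover have "real (n-1) = ?x - 1" using H(4) by simp
      ultimately have "real (L n) \<ge> (?x - 1) / real (K n) - 1" by simp
      moreover have "(?x - 1) / \<kappa> ?x \<le> (?x - 1) / real (K n)"
        using K(2) Kpos H(4) by (intro divide_left_mono) auto
      ultimately have Ll: "real (L n) \<ge> (?x - 1) / \<kappa> ?x - 1" by linarith
      have Bpos: "real (B n) > 0" using K1 by (simp add: B_def)
      have "real (m n) \<ge> real (L n) / real (B n) - 1" unfolding m_def by (rule real_div_ge) (use Bpos in simp)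
      moreover have "real (L n) / real (B n) \<ge> real (L n) / (real D + \<kappa> ?x)"
        using K(2) Bpos by (intro divide_left_mono) (auto simp: B_def)
      moreover have "real (L n) / (real D + \<kappa> ?x) \<ge> ((?x - 1) / \<kappa> ?x - 1) / (real D + \<kappa> ?x)"
        using Ll K(2) Kpos by (intro divide_right_mono) auto
      ultimately show ?thesis unfolding lowm_def by linarith
    qed
    have pw1: "\<delta> * ?pw \<le> 1" using \<delta>1 \<delta>0 pi_le1[of "vv s (K n)"] pi_nonneg[of "vv s (K n)"]
      by (simp add: mult_le_one)
    have "measure M (E n) \<le> real (K n) * (1 - \<delta> * ?pw)^(m n)"
      unfolding E_def using Bad_measure[OF Nf less_imp_le[OF \<delta>0], where K="K n" and B="B n" and s=s and L="L n" and m="m n"]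
      by (simp add: B_def)
    also have "\<dots> \<le> real (K n) * exp (- (\<delta> * ?pw)) ^ (m n)"
    proof (intro mult_left_mono power_mono)
      show "1 - \<delta> * ?pw \<le> exp (- (\<delta> * ?pw))" using exp_ge_add_one_self[of "- (\<delta> * ?pw)"] by simp
    qed (use pw1 in auto)
    also have "\<dots> = real (K n) * exp (- (\<delta> * ?pw * real (m n)))"
      by (simp add: exp_of_nat_mult[symmetric] mult.commute)
    also have "\<dots> \<le> \<kappa> ?x * exp (- (\<delta> * ?lp * lowm ?x))"
    proof (rule mult_mono)
      show "real (K n) \<le> \<kappa> ?x" by (rule K(2))
      have "\<delta> * ?lp * lowm ?x \<le> \<delta> * ?pw * real (m n)"
        using \<delta>0 pwlow mlow H(2) lp0 pi_nonneg[of "vv s (K n)"] by (intro mult_mono) auto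
      then show "exp (- (\<delta> * ?pw * real (m n))) \<le> exp (- (\<delta> * ?lp * lowm ?x))" by simp
      show "0 \<le> \<kappa> ?x" unfolding \<kappa>_def using lnx hpos by simp
    qed simp_all
    also have "\<dots> \<le> 1 / ?x^2" using H(1) by simp
    finally show ?thesis .
  qed
  have summ: "summable (\<lambda>n. measure M (E n))"
  proof (rule summable_comparison_test_ev)
    show "eventually (\<lambda>n. norm (measure M (E n)) \<le> inverse (real n ^ 2)) sequentially"
      using ev by eventually_elim (use bound in \<open>auto simp: inverse_eq_divide\<close>)
    show "summable (\<lambda>n. inverse (real n ^ 2))" by (rule inverse_power_summable) simp
  qed
  have Esets: "E n \<in> sets M" for n unfolding E_def by (rule Bad_sets)
  have "AE \<omega> in M. eventually (\<lambda>n. \<omega> \<in> space M - E n) sequentially"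
    by (rule borel_cantelli_AE1[OF Esets]) (auto simp: summ less_top[symmetric])
  then show ?thesis
  proof (rule eventually_mono)
    fix \<omega> assume A1: "eventually (\<lambda>n. \<omega> \<in> space M - E n) sequentially"
    show "eventually (\<lambda>n. 1/h - e \<le> real (Xn (\<lambda>i. U i \<omega>) n s) / ln (real n)) sequentially"
      using A1 ev
    proof eventually_elim
      case (elim n)
      let ?x = "real n"
      have H: "(1-\<epsilon>) * ln ?x / h \<ge> real J0 + 1" "?x \<ge> 2" "1 / ln ?x \<le> e/2" using elim(2) by auto
      note K = KJ[OF H(1) H(2)]
      have K1: "K n \<ge> 1" using K(1) by simp
      have om: "\<omega> \<in> space M" "\<omega> \<notin> E n" using elim(1) by auto
      have "m n * B n \<le> L n" unfolding m_def by simp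
      moreover have "1 + K n * L n \<le> n" unfolding L_def using H(2) times_div_less_eq_dividend[of "K n" "n-1"] by linarith
      ultimately have X: "K n \<le> Xn (\<lambda>i. U i \<omega>) n s"
        using Bad_Xn[OF om(1) om(2)[unfolded E_def]] by blast
      have lnx: "ln ?x > 0" using H(2) by simp
      have "1/h - e \<le> (1-\<epsilon>)/h - 1 / ln ?x"
      proof -
        have "\<epsilon> / h \<le> e/2" using \<epsilon>0(3) hpos by (simp add: divide_le_eq mult.commute)
        then have "1/h - e/2 \<le> (1-\<epsilon>)/h" by (simp add: diff_divide_distrib)
        then show ?thesis using H(3) by linarith
      qed
      also have "\<dots> = ((1-\<epsilon>) * ln ?x / h - 1) / ln ?x" using lnx hpos by (simp add: field_simps)
      also have "\<dots> \<le> real (K n) / ln ?x" using K(3) lnx by (intro divide_right_mono) auto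
      also have "\<dots> \<le> real (Xn (\<lambda>i. U i \<omega>) n s) / ln ?x" using X lnx by (intro divide_right_mono) auto
      finally show ?case .
    qed
  qed
qed

end

theorem lemma1:
  fixes M :: "'w measure" and U :: "nat \<Rightarrow> 'w \<Rightarrow> nucl"
    and p :: "nucl \<Rightarrow> real" and Q :: "nucl \<Rightarrow> nucl \<Rightarrow> real"
    and s :: "nat \<Rightarrow> nucl" and h :: real
  assumes "prob_space M"
    and "stochastic_matrix Q" and "irreducible_matrix Q" and "aperiodic_matrix Q"
    and "invariant_measure Q p"
    and "markov_chain_from M U p Q"
    and "(\<lambda>n. (1 / real n) * ln (1 / pword M U s n)) \<longlonglongrightarrow> h"
    and "h > 0"
  shows "AE \<omega> in M. (\<lambda>n. real (Xn (\<lambda>i. U i \<omega>) n s) / ln (real n)) \<longlonglongrightarrow> 1 / h"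
proof -
  interpret mainloc p Q M U s h
    using assms(7) by (simp add: mainloc_def mproc_def mproc_axioms_def mchain_def mainloc_axioms_def assms(1-6,8))
  let ?X = "\<lambda>\<omega> n. real (Xn (\<lambda>i. U i \<omega>) n s) / ln (real n)"
  have "AE \<omega> in M. \<forall>k::nat. eventually (\<lambda>n. ?X \<omega> n \<le> 1/h + 1/(real k + 1)) sequentially
      \<and> eventually (\<lambda>n. 1/h - 1/(real k + 1) \<le> ?X \<omega> n) sequentially"
  proof (subst AE_all_countable, intro allI AE_conjI)
    fix k :: nat
    have "1/(real k + 1) > 0" by simp
    then show "AE \<omega> in M. eventually (\<lambda>n. ?X \<omega> n \<le> 1/h + 1/(real k + 1)) sequentially"
      "AE \<omega> in M. eventually (\<lambda>n. 1/h - 1/(real k + 1) \<le> ?X \<omega> n) sequentially"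
      by (rule upper, rule lower)
  qed
  then show ?thesis
  proof (rule eventually_mono)
    fix \<omega> assume H: "\<forall>k::nat. eventually (\<lambda>n. ?X \<omega> n \<le> 1/h + 1/(real k + 1)) sequentially
      \<and> eventually (\<lambda>n. 1/h - 1/(real k + 1) \<le> ?X \<omega> n) sequentially"
    show "(\<lambda>n. ?X \<omega> n) \<longlonglongrightarrow> 1 / h"
    proof (rule tendstoI)
      fix r :: real assume r: "r > 0"
      obtain k where k: "inverse (real (Suc k)) < r" using reals_Archimedean[OF r] by blast
      then have k': "1/(real k + 1) < r" by (simp add: inverse_eq_divide add.commute)
      from H[rule_format, of k] show "eventually (\<lambda>n. dist (?X \<omega> n) (1/h) < r) sequentially"
      proof (elim conjE)
        assume "eventually (\<lambda>n. ?X \<omega> n \<le> 1/h + 1/(real k + 1)) sequentially"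
          "eventually (\<lambda>n. 1/h - 1/(real k + 1) \<le> ?X \<omega> n) sequentially"
        then show ?thesis
        proof eventually_elim
          case (elim n)
          have "\<bar>?X \<omega> n - 1/h\<bar> \<le> 1/(real k + 1)"
            unfolding abs_le_iff using elim by linarith
          then show ?case unfolding dist_real_def using k' by linarith
        qed
      qed
    qed
  qed
qed

end
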